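(* Let $\mathbf{P}=(p_{i,j})_{i,j=0}^{d}$ be the transition matrix of an ergodic discrete-time Markov chain on $\{0,\dots,d\}$ with stationary distribution $\boldsymbol{\pi}$, let $Y_1,\dots,Y_{W+1}$ be the chain started with $Y_1\sim\boldsymbol{\pi}$, and let $N_{i,j}=\sum_{t=1}^{W}\mathbf{1}_{\{Y_t=i,Y_{t+1}=j\}}$. For $n\ge 0$ let $\epsilon_{j,i}^{(n)}=[\mathbf{P}^{n}]_{j,i}-\pi_i$. Then for every state $i$ and states $j\neq j'$, $$\mathrm{Cov}[N_{i,j},N_{i,j'}]=\pi_i p_{i,j}p_{i,j'}\left(-W\pi_i+\sum_{t'=1}^{W-1}(W-t')\left(\epsilon_{j,i}^{(t'-1)}+\epsilon_{j',i}^{(t'-1)}\right)\right).$$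
   Context: $\mathbf{P}^{0}$ is the identity matrix; $\mathbf{1}_{\{\cdot\}}$ is the indicator function. *)

theory Defs
  imports Complex_Main "HOL-Library.FuncSet"
begin

text \<open>Finite Markov chains on the state space {0..d}. Matrices are functions
  nat => nat => real, only entries with indices in {0..d} are relevant.\<close>

fun mpow :: "nat \<Rightarrow> (nat \<Rightarrow> nat \<Rightarrow> real) \<Rightarrow> nat \<Rightarrow> nat \<Rightarrow> nat \<Rightarrow> real" where
  "mpow d P 0 = (\<lambda>i j. if i = j then 1 else 0)"
| "mpow d P (Suc n) = (\<lambda>i j. \<Sum>k\<le>d. mpow d P n i k * P k j)"

definition stochastic :: "nat \<Rightarrow> (nat \<Rightarrow> nat \<Rightarrow> real) \<Rightarrow> bool" where
  "stochastic d P \<longleftrightarrow> (\<forall>i\<le>d. \<forall>j\<le>d. 0 \<le> P i j) \<and> (\<forall>i\<le>d. (\<Sum>j\<le>d. P i j) = 1)"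

definition irreducible_chain :: "nat \<Rightarrow> (nat \<Rightarrow> nat \<Rightarrow> real) \<Rightarrow> bool" where
  "irreducible_chain d P \<longleftrightarrow> (\<forall>i\<le>d. \<forall>j\<le>d. \<exists>n. mpow d P n i j > 0)"

definition period :: "nat \<Rightarrow> (nat \<Rightarrow> nat \<Rightarrow> real) \<Rightarrow> nat \<Rightarrow> nat" where
  "period d P i = Gcd {n. n > 0 \<and> mpow d P n i i > 0}"

definition aperiodic_chain :: "nat \<Rightarrow> (nat \<Rightarrow> nat \<Rightarrow> real) \<Rightarrow> bool" where
  "aperiodic_chain d P \<longleftrightarrow> (\<forall>i\<le>d. period d P i = 1)"

text \<open>Finite state space: ergodic = irreducible and aperiodic (positive recurrence is automatic).\<close>
definition ergodic_chain :: "nat \<Rightarrow> (nat \<Rightarrow> nat \<Rightarrow> real) \<Rightarrow> bool" where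
  "ergodic_chain d P \<longleftrightarrow> stochastic d P \<and> irreducible_chain d P \<and> aperiodic_chain d P"

definition stationary :: "nat \<Rightarrow> (nat \<Rightarrow> nat \<Rightarrow> real) \<Rightarrow> (nat \<Rightarrow> real) \<Rightarrow> bool" where
  "stationary d P \<pi> \<longleftrightarrow> (\<forall>i\<le>d. 0 \<le> \<pi> i) \<and> (\<Sum>i\<le>d. \<pi> i) = 1 \<and>
     (\<forall>j\<le>d. (\<Sum>i\<le>d. \<pi> i * P i j) = \<pi> j)"

definition paths :: "nat \<Rightarrow> nat \<Rightarrow> (nat \<Rightarrow> nat) set" where
  "paths d W = PiE {1..W+1} (\<lambda>_. {0..d})"

definition path_prob :: "(nat \<Rightarrow> nat \<Rightarrow> real) \<Rightarrow> (nat \<Rightarrow> real) \<Rightarrow> nat \<Rightarrow> (nat \<Rightarrow> nat) \<Rightarrow> real" where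
  "path_prob P \<pi> W y = \<pi> (y 1) * (\<Prod>t\<in>{1..W}. P (y t) (y (t+1)))"

definition Exp :: "nat \<Rightarrow> (nat \<Rightarrow> nat \<Rightarrow> real) \<Rightarrow> (nat \<Rightarrow> real) \<Rightarrow> nat \<Rightarrow> ((nat \<Rightarrow> nat) \<Rightarrow> real) \<Rightarrow> real" where
  "Exp d P \<pi> W X = (\<Sum>y\<in>paths d W. path_prob P \<pi> W y * X y)"

definition Cov :: "nat \<Rightarrow> (nat \<Rightarrow> nat \<Rightarrow> real) \<Rightarrow> (nat \<Rightarrow> real) \<Rightarrow> nat \<Rightarrow> ((nat \<Rightarrow> nat) \<Rightarrow> real) \<Rightarrow> ((nat \<Rightarrow> nat) \<Rightarrow> real) \<Rightarrow> real" where
  "Cov d P \<pi> W X Z = Exp d P \<pi> W (\<lambda>y. X y * Z y) - Exp d P \<pi> W X * Exp d P \<pi> W Z"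

definition Ncount :: "nat \<Rightarrow> nat \<Rightarrow> nat \<Rightarrow> (nat \<Rightarrow> nat) \<Rightarrow> real" where
  "Ncount W i j y = (\<Sum>t=1..W. if y t = i \<and> y (t+1) = j then 1 else 0)"

definition eps :: "nat \<Rightarrow> (nat \<Rightarrow> nat \<Rightarrow> real) \<Rightarrow> (nat \<Rightarrow> real) \<Rightarrow> nat \<Rightarrow> nat \<Rightarrow> nat \<Rightarrow> real" where
  "eps d P \<pi> n j i = mpow d P n j i - \<pi> i"

end

theory Submission imports Defs begin

lemma sum_PiE_insert:
  assumes "x \<notin> S"
  shows "(\<Sum>f\<in>PiE (insert x S) T. F f) = (\<Sum>y\<in>T x. \<Sum>g\<in>PiE S T. F (g(x:=y)))"
proof -
  have "(\<Sum>f\<in>PiE (insert x S) T. F f) = (\<Sum>p\<in>T x \<times> PiE S T. F ((\<lambda>(y, g). g(x := y)) p))"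
    unfolding PiE_insert_eq by (subst sum.reindex[OF inj_combinator[OF assms]]) (auto intro!: sum.cong simp: comp_def)
  also have "\<dots> = (\<Sum>y\<in>T x. \<Sum>g\<in>PiE S T. F (g(x:=y)))"
    by (subst sum.cartesian_product) (auto intro!: sum.cong)
  finally show ?thesis .
qed

fun gam :: "nat \<Rightarrow> (nat\<Rightarrow>nat\<Rightarrow>real) \<Rightarrow> (nat\<Rightarrow>real) \<Rightarrow> (nat\<Rightarrow>nat\<Rightarrow>real) \<Rightarrow> nat \<Rightarrow> nat \<Rightarrow> real" where
  "gam d P \<pi> h 0 k = \<pi> k"
| "gam d P \<pi> h (Suc n) k = (\<Sum>l\<le>d. gam d P \<pi> h n l * h (n+1) l * P l k)"

lemma E_gen:
  "(\<Sum>y\<in>paths d W. path_prob P \<pi> W y * (\<Prod>u\<in>{1..W}. h u (y u)) * g (y (W+1)))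
   = (\<Sum>k\<le>d. gam d P \<pi> h W k * g k)"
proof (induction W arbitrary: g)
  case 0
  have "paths d 0 = PiE (insert 1 {}) (\<lambda>_. {0..d})" by (simp add: paths_def)
  then have "(\<Sum>y\<in>paths d 0. path_prob P \<pi> 0 y * (\<Prod>u\<in>{1..0}. h u (y u)) * g (y (0+1)))
     = (\<Sum>x\<in>{0..d}. \<pi> x * g x)"
    by (simp add: sum_PiE_insert path_prob_def)
  then show ?case by (simp add: atLeast0AtMost)
next
  case (Suc W)
  have ins: "{1..Suc W+1} = insert (W+2) {1..W+1}" by auto
  have pp: "path_prob P \<pi> (Suc W) (y(W+2:=x)) = path_prob P \<pi> W y * P (y (W+1)) x" for y x
  proof -
    have "(\<Prod>t\<in>{1..Suc W}. P ((y(W+2:=x)) t) ((y(W+2:=x)) (t+1)))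
       = (\<Prod>t\<in>{1..W}. P ((y(W+2:=x)) t) ((y(W+2:=x)) (t+1))) * P (y (W+1)) x"
      by (simp add: prod.cl_ivl_Suc)
    also have "(\<Prod>t\<in>{1..W}. P ((y(W+2:=x)) t) ((y(W+2:=x)) (t+1))) = (\<Prod>t\<in>{1..W}. P (y t) (y (t+1)))"
      by (rule prod.cong) auto
    finally show ?thesis by (simp add: path_prob_def)
  qed
  have ph: "(\<Prod>u\<in>{1..Suc W}. h u ((y(W+2:=x)) u)) = (\<Prod>u\<in>{1..W}. h u (y u)) * h (W+1) (y (W+1))" for y x
  proof -
    have "(\<Prod>u\<in>{1..Suc W}. h u ((y(W+2:=x)) u)) = (\<Prod>u\<in>{1..W}. h u ((y(W+2:=x)) u)) * h (W+1) (y (W+1))"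
      by (simp add: prod.cl_ivl_Suc)
    also have "(\<Prod>u\<in>{1..W}. h u ((y(W+2:=x)) u)) = (\<Prod>u\<in>{1..W}. h u (y u))"
      by (rule prod.cong) auto
    finally show ?thesis .
  qed
  have "(\<Sum>y\<in>paths d (Suc W). path_prob P \<pi> (Suc W) y * (\<Prod>u\<in>{1..Suc W}. h u (y u)) * g (y (Suc W+1)))
    = (\<Sum>x\<in>{0..d}. \<Sum>y\<in>paths d W. path_prob P \<pi> (Suc W) (y(W+2:=x)) * (\<Prod>u\<in>{1..Suc W}. h u ((y(W+2:=x)) u)) * g ((y(W+2:=x)) (Suc W+1)))"
    unfolding paths_def ins by (subst sum_PiE_insert) auto
  also have "\<dots> = (\<Sum>x\<in>{0..d}. \<Sum>y\<in>paths d W. path_prob P \<pi> W y * (\<Prod>u\<in>{1..W}. h u (y u)) * (h (W+1) (y (W+1)) * P (y (W+1)) x * g x))"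
    by (intro sum.cong refl) (simp add: pp[simplified] ph[simplified])
  also have "\<dots> = (\<Sum>x\<in>{0..d}. \<Sum>k\<le>d. gam d P \<pi> h W k * (h (W+1) k * P k x * g x))"
    apply (intro sum.cong refl)
    subgoal for x using Suc.IH[of "\<lambda>k. h (W+1) k * P k x * g x"] by simp
    done
  also have "\<dots> = (\<Sum>x\<le>d. gam d P \<pi> h (Suc W) x * g x)"
    by (simp add: atLeast0AtMost sum_distrib_right mult.assoc)
  finally show ?case .
qed

lemma mpow_row:
  assumes "stochastic d P" "l \<le> d"
  shows "(\<Sum>k\<le>d. mpow d P m l k) = 1"
proof (induction m)
  case 0 then show ?case using assms(2) by simp
next
  case (Suc m)
  have "(\<Sum>k\<le>d. mpow d P (Suc m) l k) = (\<Sum>k\<le>d. \<Sum>r\<le>d. mpow d P m l r * P r k)"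
    by simp
  also have "\<dots> = (\<Sum>r\<le>d. \<Sum>k\<le>d. mpow d P m l r * P r k)"
    by (rule sum.swap)
  also have "\<dots> = (\<Sum>r\<le>d. mpow d P m l r * (\<Sum>k\<le>d. P r k))"
    by (simp add: sum_distrib_left)
  also have "\<dots> = (\<Sum>r\<le>d. mpow d P m l r)"
    using assms(1) by (intro sum.cong) (auto simp: stochastic_def)
  finally show ?case using Suc by simp
qed

lemma mpow_prop:
  "(\<Sum>r\<le>d. (\<Sum>l\<le>d. v l * mpow d P m l r) * P r k) = (\<Sum>l\<le>d. v l * mpow d P (Suc m) l k)"
proof -
  have "(\<Sum>r\<le>d. (\<Sum>l\<le>d. v l * mpow d P m l r) * P r k) = (\<Sum>r\<le>d. \<Sum>l\<le>d. v l * (mpow d P m l r * P r k))"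
    by (simp add: sum_distrib_right mult.assoc)
  also have "\<dots> = (\<Sum>l\<le>d. \<Sum>r\<le>d. v l * (mpow d P m l r * P r k))"
    by (rule sum.swap)
  also have "\<dots> = (\<Sum>l\<le>d. v l * mpow d P (Suc m) l k)"
    by (simp add: sum_distrib_left)
  finally show ?thesis .
qed

lemma mpow_stat:
  assumes "stationary d P \<pi>" "k \<le> d"
  shows "(\<Sum>l\<le>d. \<pi> l * mpow d P m l k) = \<pi> k"
  using assms(2)
proof (induction m arbitrary: k)
  case 0 then show ?case by (simp add: if_distrib cong: if_cong)
next
  case (Suc m)
  have "(\<Sum>l\<le>d. \<pi> l * mpow d P (Suc m) l k) = (\<Sum>r\<le>d. (\<Sum>l\<le>d. \<pi> l * mpow d P m l r) * P r k)"
    by (rule mpow_prop[symmetric])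
  also have "\<dots> = (\<Sum>r\<le>d. \<pi> r * P r k)"
    using Suc.IH by (intro sum.cong) auto
  finally show ?case using assms(1) Suc.prems by (simp add: stationary_def)
qed

lemma mpow_1: "l \<le> d \<Longrightarrow> mpow d P 1 l k = P l k"
proof -
  assume l: "l \<le> d"
  have "mpow d P 1 l k = (\<Sum>r\<le>d. (if l = r then 1 else 0) * P r k)" by simp
  also have "\<dots> = (\<Sum>r\<le>d. if l = r then P r k else 0)" by (intro sum.cong) auto
  finally show ?thesis using l by simp
qed

lemma mpow_Suc0: "l \<le> d \<Longrightarrow> mpow d P (Suc 0) l k = P l k"
  using mpow_1 by (simp only: One_nat_def)

lemma gam_ones:
  assumes "\<forall>u\<in>{n+1..n+m}. h u = (\<lambda>_. 1)" "k \<le> d"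
  shows "gam d P \<pi> h (n+m) k = (\<Sum>l\<le>d. gam d P \<pi> h n l * mpow d P m l k)"
  using assms
proof (induction m arbitrary: k)
  case 0 then show ?case by (simp add: if_distrib cong: if_cong)
next
  case (Suc m)
  have "gam d P \<pi> h (n + Suc m) k = (\<Sum>r\<le>d. gam d P \<pi> h (n+m) r * P r k)"
    using Suc.prems(1) by simp
  also have "\<dots> = (\<Sum>r\<le>d. (\<Sum>l\<le>d. gam d P \<pi> h n l * mpow d P m l r) * P r k)"
    using Suc.prems(1) Suc.IH by (intro sum.cong) auto
  finally show ?case by (simp only: mpow_prop)
qed

lemma gam_ones_gen:
  assumes "\<forall>u\<in>{n+2..n+m+1}. h u = (\<lambda>_. 1)"
  shows "gam d P \<pi> h (n+1+m) k = (\<Sum>l\<le>d. gam d P \<pi> h n l * h (n+1) l * mpow d P (m+1) l k)"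
  using assms
proof (induction m arbitrary: k)
  case 0 then show ?case by (auto intro!: sum.cong simp: mpow_Suc0 simp del: mpow.simps)
next
  case (Suc m)
  have "gam d P \<pi> h (n + 1 + Suc m) k = (\<Sum>r\<le>d. gam d P \<pi> h (n+1+m) r * P r k)"
    using Suc.prems(1) by simp
  also have "\<dots> = (\<Sum>r\<le>d. (\<Sum>l\<le>d. (gam d P \<pi> h n l * h (n+1) l) * mpow d P (Suc m) l r) * P r k)"
    using Suc.prems(1) Suc.IH by (intro sum.cong) auto
  also have "\<dots> = (\<Sum>l\<le>d. (gam d P \<pi> h n l * h (n+1) l) * mpow d P (Suc (Suc m)) l k)"
    by (rule mpow_prop)
  finally show ?case by simp
qed

lemma gam_init:
  assumes "stationary d P \<pi>" "\<forall>u\<in>{1..n}. h u = (\<lambda>_. 1)" "k \<le> d"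
  shows "gam d P \<pi> h n k = \<pi> k"
  using gam_ones[of 0 n h k d P \<pi>] assms mpow_stat[OF assms(1) assms(3)] by simp

lemma gam_tail:
  assumes "stochastic d P" "\<forall>u\<in>{n+2..W+1}. h u = (\<lambda>_. 1)" "n \<le> W"
  shows "(\<Sum>k\<le>d. gam d P \<pi> h W k * h (W+1) k) = (\<Sum>l\<le>d. gam d P \<pi> h n l * h (n+1) l)"
proof (cases "n = W")
  case True then show ?thesis by simp
next
  case False
  obtain m where W: "W = n+1+m"
  proof
    show "W = n+1+(W-n-1)" using False assms(3) by simp
  qed
  have ones: "\<forall>u\<in>{n+2..n+m+1}. h u = (\<lambda>_. 1)" using assms(2) W by auto
  have hW: "h (W+1) = (\<lambda>_. 1)" using assms(2) W by auto
  have g: "gam d P \<pi> h W k = (\<Sum>l\<le>d. gam d P \<pi> h n l * h (n+1) l * mpow d P (m+1) l k)" for k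
    unfolding W by (rule gam_ones_gen[OF ones])
  have "(\<Sum>k\<le>d. gam d P \<pi> h W k * h (W+1) k) = (\<Sum>k\<le>d. \<Sum>l\<le>d. gam d P \<pi> h n l * h (n+1) l * mpow d P (m+1) l k)"
    by (simp only: g hW mult_1_right)
  also have "\<dots> = (\<Sum>l\<le>d. \<Sum>k\<le>d. gam d P \<pi> h n l * h (n+1) l * mpow d P (m+1) l k)"
    by (rule sum.swap)
  also have "\<dots> = (\<Sum>l\<le>d. gam d P \<pi> h n l * h (n+1) l * (\<Sum>k\<le>d. mpow d P (m+1) l k))"
    by (simp only: sum_distrib_left)
  also have "\<dots> = (\<Sum>l\<le>d. gam d P \<pi> h n l * h (n+1) l)"
    by (intro sum.cong refl) (simp add: mpow_row[OF assms(1)] del: mpow.simps)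
  finally show ?thesis .
qed

lemma Exp_prod:
  "Exp d P \<pi> W (\<lambda>y. \<Prod>u\<in>{1..W+1}. h u (y u)) = (\<Sum>k\<le>d. gam d P \<pi> h W k * h (W+1) k)"
  unfolding Exp_def using E_gen[where g="h (W+1)" and d=d and W=W and P=P and \<pi>=\<pi> and h=h]
  by (simp add: prod.cl_ivl_Suc mult.assoc)

definition ind :: "nat \<Rightarrow> nat \<Rightarrow> real" where "ind a k = (if k = a then 1 else 0)"
definition evt :: "nat \<Rightarrow> (nat \<Rightarrow> real) \<Rightarrow> nat \<Rightarrow> nat \<Rightarrow> real" where
  "evt t f u k = (if u = t then f k else 1)"

lemma prod_evt: "finite S \<Longrightarrow> t \<in> S \<Longrightarrow> (\<Prod>u\<in>S. evt t f u (y u)) = f (y t)"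
  unfolding evt_def by (simp add: prod.delta')

lemma sum_ind: "b \<le> d \<Longrightarrow> (\<Sum>l\<le>d. g l * ind b l) = g b"
  unfolding ind_def by (simp add: if_distrib[of "\<lambda>x. _ * x"] cong: if_cong)

lemma sum_ind': "b \<le> d \<Longrightarrow> (\<Sum>l\<le>d. ind b l * g l) = g b"
  unfolding ind_def by (simp add: if_distrib[of "\<lambda>x. x * _"] cong: if_cong)

lemma Exp_single:
  assumes st: "stochastic d P" and sta: "stationary d P \<pi>" and ab: "a \<le> d" "b \<le> d"
    and t: "1 \<le> t" "t \<le> W"
  shows "Exp d P \<pi> W (\<lambda>y. if y t = a \<and> y (t+1) = b then 1 else 0) = \<pi> a * P a b"
proof -
  define h where "h = (\<lambda>u k. evt t (ind a) u k * evt (t+1) (ind b) u k)"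
  have f: "(\<lambda>y. if y t = a \<and> y (t+1) = b then 1 else 0) = (\<lambda>y. \<Prod>u\<in>{1..W+1}. h u (y u))"
  proof
    fix y :: "nat \<Rightarrow> nat"
    have "(\<Prod>u\<in>{1..W+1}. h u (y u)) = (\<Prod>u\<in>{1..W+1}. evt t (ind a) u (y u)) * (\<Prod>u\<in>{1..W+1}. evt (t+1) (ind b) u (y u))"
      unfolding h_def by (rule prod.distrib)
    also have "\<dots> = ind a (y t) * ind b (y (t+1))"
    proof -
      have "(\<Prod>u\<in>{1..W+1}. evt t (ind a) u (y u)) = ind a (y t)" using t by (intro prod_evt) auto
      moreover have "(\<Prod>u\<in>{1..W+1}. evt (t+1) (ind b) u (y u)) = ind b (y (t+1))" using t by (intro prod_evt) auto
      ultimately show ?thesis by simp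
    qed
    finally show "(if y t = a \<and> y (t+1) = b then 1 else 0) = (\<Prod>u\<in>{1..W+1}. h u (y u))"
      by (simp add: ind_def)
  qed
  have ones: "\<forall>u\<in>{t+2..W+1}. h u = (\<lambda>_. 1)" by (auto simp: h_def evt_def)
  have ht1: "h (t+1) = ind b" by (auto simp: h_def evt_def)
  have ht: "h t = ind a" by (auto simp: h_def evt_def)
  have init: "gam d P \<pi> h (t-1) l = \<pi> l" if "l \<le> d" for l
    by (rule gam_init[OF sta _ that]) (auto simp: h_def evt_def fun_eq_iff)
  have "Exp d P \<pi> W (\<lambda>y. if y t = a \<and> y (t+1) = b then 1 else 0) = (\<Sum>l\<le>d. gam d P \<pi> h t l * h (t+1) l)"
    unfolding f Exp_prod using gam_tail[OF st ones] t by simp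
  also have "\<dots> = gam d P \<pi> h t b" unfolding ht1 using ab by (simp add: sum_ind)
  also have "gam d P \<pi> h t b = gam d P \<pi> h (Suc (t-1)) b" using t by simp
  also have "\<dots> = (\<Sum>l\<le>d. \<pi> l * ind a l * P l b)"
    using t by (simp only: gam.simps) (intro sum.cong refl, simp add: init[simplified] ht)
  also have "\<dots> = \<pi> a * P a b" using ab
    by (simp add: ind_def if_distrib[of "\<lambda>x. _ * x"] if_distrib[of "\<lambda>x. x * _"] cong: if_cong)
  finally show ?thesis .
qed

lemma sum_ind_mid: "b \<le> d \<Longrightarrow> (\<Sum>l\<le>d. f l * ind b l * g l) = f b * g b"
  unfolding ind_def by (simp add: if_distrib[of "\<lambda>x. _ * x"] if_distrib[of "\<lambda>x. x * _"] cong: if_cong)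

lemma Exp_pair:
  assumes st: "stochastic d P" and sta: "stationary d P \<pi>"
    and ab: "a \<le> d" "b \<le> d" "c \<le> d" "e \<le> d"
    and t: "1 \<le> t" "t < s" "s \<le> W"
  shows "Exp d P \<pi> W (\<lambda>y. (if y t = a \<and> y (t+1) = b then 1 else 0) * (if y s = c \<and> y (s+1) = e then 1 else 0))
     = \<pi> a * P a b * mpow d P (s-t-1) b c * P c e"
proof -
  define h where "h = (\<lambda>u k. evt t (ind a) u k * evt (t+1) (ind b) u k * evt s (ind c) u k * evt (s+1) (ind e) u k)"
  have f: "(\<lambda>y. (if y t = a \<and> y (t+1) = b then 1 else 0) * (if y s = c \<and> y (s+1) = e then 1 else 0)) = (\<lambda>y. \<Prod>u\<in>{1..W+1}. h u (y u))"
  proof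
    fix y :: "nat \<Rightarrow> nat"
    have "(\<Prod>u\<in>{1..W+1}. h u (y u)) = (\<Prod>u\<in>{1..W+1}. evt t (ind a) u (y u)) * (\<Prod>u\<in>{1..W+1}. evt (t+1) (ind b) u (y u))
       * (\<Prod>u\<in>{1..W+1}. evt s (ind c) u (y u)) * (\<Prod>u\<in>{1..W+1}. evt (s+1) (ind e) u (y u))"
      unfolding h_def by (simp only: prod.distrib)
    also have "\<dots> = ind a (y t) * ind b (y (t+1)) * ind c (y s) * ind e (y (s+1))"
    proof -
      have "(\<Prod>u\<in>{1..W+1}. evt t (ind a) u (y u)) = ind a (y t)" using t by (intro prod_evt) auto
      moreover have "(\<Prod>u\<in>{1..W+1}. evt (t+1) (ind b) u (y u)) = ind b (y (t+1))" using t by (intro prod_evt) auto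
      moreover have "(\<Prod>u\<in>{1..W+1}. evt s (ind c) u (y u)) = ind c (y s)" using t by (intro prod_evt) auto
      moreover have "(\<Prod>u\<in>{1..W+1}. evt (s+1) (ind e) u (y u)) = ind e (y (s+1))" using t by (intro prod_evt) auto
      ultimately show ?thesis by simp
    qed
    finally show "(if y t = a \<and> y (t+1) = b then 1 else 0) * (if y s = c \<and> y (s+1) = e then 1 else 0) = (\<Prod>u\<in>{1..W+1}. h u (y u))"
      by (simp add: ind_def)
  qed
  have ones: "\<forall>u\<in>{s+2..W+1}. h u = (\<lambda>_. 1)" using t by (auto simp: h_def evt_def fun_eq_iff)
  have hs1: "h (s+1) = ind e" using t by (auto simp: h_def evt_def fun_eq_iff)
  have ht: "h t = ind a" using t by (auto simp: h_def evt_def fun_eq_iff)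
  have init: "gam d P \<pi> h (t-1) l = \<pi> l" if "l \<le> d" for l
    by (rule gam_init[OF sta _ that]) (insert t, auto simp: h_def evt_def fun_eq_iff)
  have gt: "gam d P \<pi> h t k = \<pi> a * P a k" for k
  proof -
    have "gam d P \<pi> h t k = gam d P \<pi> h (Suc (t-1)) k" using t by simp
    also have "\<dots> = (\<Sum>l\<le>d. \<pi> l * ind a l * P l k)"
      using t by (simp only: gam.simps) (intro sum.cong refl, simp add: init[simplified] ht)
    also have "\<dots> = \<pi> a * P a k" by (rule sum_ind_mid) (use ab in simp)
    finally show ?thesis .
  qed
  have "Exp d P \<pi> W (\<lambda>y. (if y t = a \<and> y (t+1) = b then 1 else 0) * (if y s = c \<and> y (s+1) = e then 1 else 0))
      = (\<Sum>l\<le>d. gam d P \<pi> h s l * h (s+1) l)"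
    unfolding f Exp_prod using gam_tail[OF st ones] t by simp
  also have "\<dots> = gam d P \<pi> h s e" unfolding hs1 using ab by (simp add: sum_ind)
  also have "\<dots> = \<pi> a * P a b * mpow d P (s-t-1) b c * P c e"
  proof (cases "s = t+1")
    case True
    have h1: "h (t+1) = (\<lambda>k. ind b k * ind c k)" using True t by (auto simp: h_def evt_def fun_eq_iff)
    have "gam d P \<pi> h s e = (\<Sum>l\<le>d. gam d P \<pi> h t l * h (t+1) l * P l e)" using True by simp
    also have "\<dots> = (\<Sum>l\<le>d. (\<pi> a * P a l) * ind b l * (ind c l * P l e))"
      by (intro sum.cong refl) (simp add: gt h1[simplified] mult.assoc)
    also have "\<dots> = \<pi> a * P a b * (ind c b * P b e)" by (rule sum_ind_mid) (use ab in simp)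
    finally show ?thesis using True by (simp add: ind_def)
  next
    case False
    then obtain m where sm: "s = Suc (t+1+m)" using t by (metis add_Suc_right less_imp_Suc_add nat_neq_iff plus_1_eq_Suc less_Suc_eq add.commute)
    have h1: "h (t+1) = ind b" using False t by (auto simp: h_def evt_def fun_eq_iff)
    have hs: "h s = ind c" using False t by (auto simp: h_def evt_def fun_eq_iff)
    have ones2: "\<forall>u\<in>{t+2..t+m+1}. h u = (\<lambda>_. 1)" using sm by (auto simp: h_def evt_def fun_eq_iff)
    have g1: "gam d P \<pi> h (t+1+m) c = gam d P \<pi> h t b * mpow d P (m+1) b c"
      unfolding gam_ones_gen[OF ones2] h1 by (rule sum_ind_mid) (use ab in simp)
    have "gam d P \<pi> h s e = (\<Sum>l\<le>d. gam d P \<pi> h (t+1+m) l * h s l * P l e)"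
      unfolding sm by (simp only: gam.simps) (simp add: sm)
    also have "\<dots> = gam d P \<pi> h (t+1+m) c * P c e" unfolding hs by (rule sum_ind_mid) (use ab in simp)
    finally show ?thesis using g1 gt sm by simp
  qed
  finally show ?thesis .
qed



lemma R_ext: fixes W :: nat and f :: "nat \<Rightarrow> real" shows "(\<Sum>k=1..W-1. real (W-k) * f (k-1)) = (\<Sum>k=1..W. real (W-k) * (f (k-1)::real))"
proof (cases W)
  case 0 then show ?thesis by simp
next
  case (Suc m) then show ?thesis by (simp add: sum.cl_ivl_Suc)
qed

lemma rev_sum: fixes W :: nat and f :: "nat \<Rightarrow> real" shows "(\<Sum>t=1..W. f (W-t)) = (\<Sum>k=1..W. (f (k-1)::real))"
proof -
  have "(\<Sum>t=1..W. f (W-t)) = (\<Sum>t=1..W. f (W - (W + 1 - t)))"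
    by (subst sum.atLeastAtMost_rev) simp
  also have "\<dots> = (\<Sum>k=1..W. f (k-1))" by (intro sum.cong) auto
  finally show ?thesis .
qed

lemma tri: fixes W :: nat and f :: "nat \<Rightarrow> real" shows "(\<Sum>t=1..W. \<Sum>s=1..W. if t < s then f (s-t-1) else (0::real))
   = (\<Sum>k=1..W-1. real (W-k) * f (k-1))"
proof (induction W)
  case 0 then show ?case by simp
next
  case (Suc W)
  have "(\<Sum>t=1..Suc W. \<Sum>s=1..Suc W. if t < s then f (s-t-1) else (0::real))
     = (\<Sum>t=1..Suc W. (\<Sum>s=1..W. if t < s then f (s-t-1) else (0::real)) + (if t < Suc W then f (W - t) else 0))"
    by (intro sum.cong refl) (simp add: sum.cl_ivl_Suc)
  also have "\<dots> = (\<Sum>t=1..W. \<Sum>s=1..W. if t < s then f (s-t-1) else (0::real)) + (\<Sum>t=1..W. f (W-t))"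
    by (simp add: sum.cl_ivl_Suc sum.distrib)
  also have "\<dots> = (\<Sum>k=1..W. real (W-k) * f (k-1)) + (\<Sum>k=1..W. f (k-1))"
    using Suc.IH R_ext rev_sum by simp
  also have "\<dots> = (\<Sum>k=1..W. real (Suc W-k) * f (k-1))"
    by (subst sum.distrib[symmetric], intro sum.cong refl) (simp add: of_nat_diff algebra_simps)
  finally show ?case by simp
qed

lemma sumW: fixes W :: nat shows "2 * (\<Sum>k=1..W-1. real (W-k)) = real W * real W - real W"
proof (induction W)
  case 0 then show ?case by simp
next
  case (Suc W)
  have "(\<Sum>k=1..Suc W - 1. real (Suc W - k)) = (\<Sum>k=1..W. real (W-k) + 1)"
    by (intro sum.cong) (auto simp: Suc_diff_le)
  also have "\<dots> = (\<Sum>k=1..W. real (W-k)) + real W" by (simp add: sum.distrib)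
  also have "(\<Sum>k=1..W. real (W-k)) = (\<Sum>k=1..W-1. real (W-k))"
    using R_ext[of W "\<lambda>_. 1"] by simp
  finally show ?case using Suc.IH by (simp add: algebra_simps)
qed


lemma Exp_sum: "Exp d P \<pi> W (\<lambda>y. \<Sum>t\<in>T. f t y) = (\<Sum>t\<in>T. Exp d P \<pi> W (f t))"
  unfolding Exp_def by (simp add: sum_distrib_left) (rule sum.swap)

theorem mainTheorem2:
  fixes d W :: nat and P :: "nat \<Rightarrow> nat \<Rightarrow> real" and \<pi> :: "nat \<Rightarrow> real"
    and i j j' :: nat
  assumes "ergodic_chain d P" and "stationary d P \<pi>"
    and "i \<le> d" and "j \<le> d" and "j' \<le> d" and "j \<noteq> j'"
  shows "Cov d P \<pi> W (Ncount W i j) (Ncount W i j') =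
    \<pi> i * P i j * P i j' *
      (- real W * \<pi> i + (\<Sum>t'=1..W-1. real (W - t') *
          (eps d P \<pi> (t'-1) j i + eps d P \<pi> (t'-1) j' i)))"
proof -
  have st: "stochastic d P" using assms(1) by (simp add: ergodic_chain_def)
  note sta = assms(2)
  define A where "A b t y = (if y t = i \<and> y (t+1) = b then 1 else (0::real))" for b t and y :: "nat \<Rightarrow> nat"
  have N: "Ncount W i b = (\<lambda>y. \<Sum>t=1..W. A b t y)" for b
    by (simp add: Ncount_def A_def fun_eq_iff)
  have EN: "Exp d P \<pi> W (Ncount W i b) = real W * (\<pi> i * P i b)" if "b \<le> d" for b
  proof -
    have "Exp d P \<pi> W (Ncount W i b) = (\<Sum>t=1..W. Exp d P \<pi> W (A b t))"
      unfolding N by (rule Exp_sum)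
    also have "\<dots> = (\<Sum>t=1..W. \<pi> i * P i b)"
      apply (intro sum.cong refl)
      subgoal for t using Exp_single[OF st sta assms(3) that, of t W] by (simp add: A_def[abs_def])
      done
    finally show ?thesis by simp
  qed
  define G where "G k = mpow d P k j i" for k
  define G' where "G' k = mpow d P k j' i" for k
  define c where "c = \<pi> i * P i j * P i j'"
  have trm: "Exp d P \<pi> W (\<lambda>y. A j t y * A j' s y) =
     c * (if t < s then G (s-t-1) else 0) + c * (if s < t then G' (t-s-1) else 0)"
    if ts: "t \<in> {1..W}" "s \<in> {1..W}" for t s
  proof (cases "t < s")
    case True
    have "Exp d P \<pi> W (\<lambda>y. A j t y * A j' s y) = \<pi> i * P i j * mpow d P (s-t-1) j i * P i j'"
      unfolding A_def using Exp_pair[OF st sta assms(3,4,3,5), of t s W] ts True by simp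
    then show ?thesis using True by (simp add: c_def G_def)
  next
    case False
    show ?thesis
    proof (cases "s < t")
      case True
      have "Exp d P \<pi> W (\<lambda>y. A j t y * A j' s y) = Exp d P \<pi> W (\<lambda>y. A j' s y * A j t y)"
        by (simp add: mult.commute)
      also have "\<dots> = \<pi> i * P i j' * mpow d P (t-s-1) j' i * P i j"
        unfolding A_def using Exp_pair[OF st sta assms(3,5,3,4), of s t W] ts True by simp
      finally show ?thesis using True False by (simp add: c_def G'_def)
    next
      case False2: False
      then have "t = s" using False by simp
      then have "(\<lambda>y. A j t y * A j' s y) = (\<lambda>y. 0)" using assms(6) by (auto simp: A_def fun_eq_iff)
      then show ?thesis using False False2 by (simp add: Exp_def)
    qed
  qed
  have ENN: "Exp d P \<pi> W (\<lambda>y. Ncount W i j y * Ncount W i j' y) = 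
     c * (\<Sum>k=1..W-1. real (W-k) * G (k-1)) + c * (\<Sum>k=1..W-1. real (W-k) * G' (k-1))"
  proof -
    have "Exp d P \<pi> W (\<lambda>y. Ncount W i j y * Ncount W i j' y) = Exp d P \<pi> W (\<lambda>y. \<Sum>t=1..W. \<Sum>s=1..W. A j t y * A j' s y)"
      unfolding N by (simp add: sum_product)
    also have "\<dots> = (\<Sum>t=1..W. \<Sum>s=1..W. Exp d P \<pi> W (\<lambda>y. A j t y * A j' s y))"
      by (simp add: Exp_sum)
    also have "\<dots> = (\<Sum>t=1..W. \<Sum>s=1..W. c * (if t < s then G (s-t-1) else 0) + c * (if s < t then G' (t-s-1) else 0))"
      by (intro sum.cong refl) (simp add: trm)
    also have "\<dots> = c * (\<Sum>t=1..W. \<Sum>s=1..W. if t < s then G (s-t-1) else 0) + c * (\<Sum>t=1..W. \<Sum>s=1..W. if s < t then G' (t-s-1) else 0)"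
      by (simp add: sum.distrib sum_distrib_left)
    also have "(\<Sum>t=1..W. \<Sum>s=1..W. if s < t then G' (t-s-1) else 0) = (\<Sum>s=1..W. \<Sum>t=1..W. if s < t then G' (t-s-1) else 0)"
      by (rule sum.swap)
    finally show ?thesis by (simp only: tri)
  qed
  have E: "(\<Sum>t'=1..W-1. real (W - t') * (eps d P \<pi> (t'-1) j i + eps d P \<pi> (t'-1) j' i))
     = (\<Sum>k=1..W-1. real (W-k) * G (k-1)) + (\<Sum>k=1..W-1. real (W-k) * G' (k-1)) - \<pi> i * (2 * (\<Sum>k=1..W-1. real (W-k)))"
    by (simp add: eps_def G_def G'_def algebra_simps sum.distrib sum_subtractf sum_distrib_left sum_distrib_right)
  show ?thesis
    unfolding Cov_def ENN EN[OF assms(4)] EN[OF assms(5)] E sumW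
    by (simp add: c_def algebra_simps)
qed

end
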